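(* Let $(G_n)_{n \geq 1}$ be a sequence of finite solvable groups of bounded derived length with $|G_n| \to \infty$. Then $(G_n)_{n \geq 1}$ does not have property BAb; that is, there is no function $f$ with $ab_k(G_n) \leq f(k)$ for all $k$ and all $n$. In particular $(G_n)_{n \geq 1}$ is not an expanding sequence of groups.
   Context: For a group $G$, $G' = [G,G]$ and $ab_k(G) = \sup\{ |H : H'| : H \leqslant G, \ |G:H| \leq k\}$. A sequence of groups $(G_n)$ has property BAb (bounded abelianizations) if there is a function $f$ of $k$ alone with $ab_k(G_n) \leq f(k)$ for all $k, n$. For a finite group $G$ and symmetric generating set $S$, the Cayley graph $\mathrm{Cay}(G,S)$ has vertex set $G$ and edges $(g, gs)$ for $g \in G$, $s \in S$. For a finite graph $\Gamma$, $h_{ver}(\Gamma) = \min_{X \neq \emptyset, |X| \leq |V(\Gamma)|/2} |\partial_{ver}X|/|X|$, where $\partial_{ver}X$ is the set of vertices at distance exactly $1$ from $X$; a sequence of regular bounded-degree graphs with vertex counts tending to infinity is expander if $h_{ver} \geq \varepsilon$ for a fixed $\varepsilon>0$. A sequence of finite groups $(G_n)$ with $|G_n| \to \infty$ is an expanding sequence if there are symmetric generating sets $S_n$ of bounded cardinality with $(\mathrm{Cay}(G_n, S_n))$ expander graphs. *)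

theory Defs
  imports "HOL-Algebra.Algebra"
begin

definition group_index :: "('a, 'b) monoid_scheme \<Rightarrow> 'a set \<Rightarrow> nat" where
  "group_index G H = card (rcosets\<^bsub>G\<^esub> H)"

definition ab_k :: "nat \<Rightarrow> ('a, 'b) monoid_scheme \<Rightarrow> nat" where
  "ab_k k G = Sup {group_index (G\<lparr>carrier := H\<rparr>) (derived G H) | H.
                     subgroup H G \<and> group_index G H \<le> k}"

definition has_BAb :: "(nat \<Rightarrow> ('a, 'b) monoid_scheme) \<Rightarrow> bool" where
  "has_BAb G \<longleftrightarrow> (\<exists>f :: nat \<Rightarrow> nat. \<forall>k n. ab_k k (G n) \<le> f k)"

definition symmetric_generating_set :: "('a, 'b) monoid_scheme \<Rightarrow> 'a set \<Rightarrow> bool" where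
  "symmetric_generating_set G S \<longleftrightarrow>
     S \<subseteq> carrier G \<and> (\<forall>s\<in>S. inv\<^bsub>G\<^esub> s \<in> S) \<and> generate G S = carrier G"

definition cay_vboundary :: "('a, 'b) monoid_scheme \<Rightarrow> 'a set \<Rightarrow> 'a set \<Rightarrow> 'a set" where
  "cay_vboundary G S A =
     {y \<in> carrier G. y \<notin> A \<and> (\<exists>x\<in>A. \<exists>s\<in>S. y = x \<otimes>\<^bsub>G\<^esub> s)}"

definition cay_hver_ge :: "('a, 'b) monoid_scheme \<Rightarrow> 'a set \<Rightarrow> real \<Rightarrow> bool" where
  "cay_hver_ge G S \<epsilon> \<longleftrightarrow>
     (\<forall>A. A \<subseteq> carrier G \<and> A \<noteq> {} \<and> real (card A) \<le> real (card (carrier G)) / 2 \<longrightarrow>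
          real (card (cay_vboundary G S A)) / real (card A) \<ge> \<epsilon>)"

definition expanding_sequence :: "(nat \<Rightarrow> ('a, 'b) monoid_scheme) \<Rightarrow> bool" where
  "expanding_sequence G \<longleftrightarrow>
     filterlim (\<lambda>n. card (carrier (G n))) at_top sequentially \<and>
     (\<exists>S :: nat \<Rightarrow> 'a set. \<exists>c :: nat. \<exists>\<epsilon> :: real. \<epsilon> > 0 \<and>
        (\<forall>n. symmetric_generating_set (G n) (S n) \<and> card (S n) \<le> c \<and>
             cay_hver_ge (G n) (S n) \<epsilon>))"

end

theory Submission
  imports Defs "HOL-Library.Multiset" "HOL-Library.FuncSet" "HOL-Real_Asymp.Real_Asymp"
begin


lemma idx_mult:
  assumes "group G" "finite (carrier G)" "subgroup H G"
  shows "group_index G H * card H = card (carrier G)"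
  using group.lagrange[OF assms(1) assms(3)] unfolding group_index_def order_def by simp

lemma idx_sub_mult:
  assumes "group G" "subgroup H G" "subgroup K G" "K \<subseteq> H"
  shows "group_index (G\<lparr>carrier := H\<rparr>) K * card K = card H"
proof -
  have g: "group (G\<lparr>carrier := H\<rparr>)" using group.subgroup_imp_group[OF assms(1,2)] .
  have "subgroup K (G\<lparr>carrier := H\<rparr>)" using group.subgroup_incl[OF assms(1,3,2,4)] .
  from group.lagrange[OF g this] show ?thesis unfolding group_index_def order_def by simp
qed

primrec Bd :: "nat \<Rightarrow> (nat \<Rightarrow> nat) \<Rightarrow> nat" where
  "Bd 0 f = 1"
| "Bd (Suc d) f = f 1 * Bd d (\<lambda>k. f (f 1 * k))"

lemma bound_A:
  assumes G: "group G" "finite (carrier G)"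
  shows "subgroup H G \<Longrightarrow> (derived G ^^ d) H = {\<one>\<^bsub>G\<^esub>} \<Longrightarrow>
    (\<forall>K k. subgroup K G \<longrightarrow> K \<subseteq> H \<longrightarrow> card H \<le> k * card K \<longrightarrow> card K \<le> f k * card (derived G K))
    \<Longrightarrow> card H \<le> Bd d f"
proof (induction d arbitrary: H f)
  case 0
  then show ?case by simp
next
  case (Suc d)
  define H1 where "H1 = derived G H"
  have sH: "H \<subseteq> carrier G" using Suc.prems(1) subgroup.subset by blast
  have sub1: "subgroup H1 G" unfolding H1_def using group.derived_is_subgroup[OF G(1) sH] .
  have incl: "H1 \<subseteq> H" unfolding H1_def using group.derived_incl[OF G(1) _ Suc.prems(1)] by simp
  have fin: "finite H" using G(2) sH finite_subset by blast
  have c1: "card H \<le> f 1 * card H1"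
    using Suc.prems(3)[rule_format, of H 1] Suc.prems(1) unfolding H1_def by simp
  have dd: "(derived G ^^ d) H1 = {\<one>\<^bsub>G\<^esub>}"
    using Suc.prems(2) unfolding H1_def by (simp add: funpow_Suc_right del: funpow.simps)
  have hyp: "\<forall>K k. subgroup K G \<longrightarrow> K \<subseteq> H1 \<longrightarrow> card H1 \<le> k * card K \<longrightarrow>
        card K \<le> (\<lambda>k. f (f 1 * k)) k * card (derived G K)"
  proof (intro allI impI)
    fix K k assume K: "subgroup K G" "K \<subseteq> H1" "card H1 \<le> k * card K"
    have "card H \<le> f 1 * (k * card K)" using c1 K(3) order_trans mult_le_mono2 by blast
    then have "card H \<le> (f 1 * k) * card K" by (simp add: mult.assoc)
    then show "card K \<le> (\<lambda>k. f (f 1 * k)) k * card (derived G K)"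
      using Suc.prems(3) K incl by auto
  qed
  have "card H1 \<le> Bd d (\<lambda>k. f (f 1 * k))" using Suc.IH[OF sub1 dd hyp] .
  then show ?case using c1 by (simp add: order_trans)
qed



definition lprod :: "('a, 'b) monoid_scheme \<Rightarrow> 'a list \<Rightarrow> 'a" where
  "lprod G xs = foldr (\<lambda>x y. x \<otimes>\<^bsub>G\<^esub> y) xs \<one>\<^bsub>G\<^esub>"

lemma lprod_Nil[simp]: "lprod G [] = \<one>\<^bsub>G\<^esub>" by (simp add: lprod_def)
lemma lprod_Cons[simp]: "lprod G (a # xs) = a \<otimes>\<^bsub>G\<^esub> lprod G xs" by (simp add: lprod_def)

lemma (in group) lprod_closed: "set xs \<subseteq> H \<Longrightarrow> subgroup H G \<Longrightarrow> lprod G xs \<in> H"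
  by (induction xs) (auto simp: subgroup.one_closed subgroup.m_closed)

lemma (in group) lprod_append: "set xs \<subseteq> carrier G \<Longrightarrow> set ys \<subseteq> carrier G \<Longrightarrow>
   lprod G (xs @ ys) = lprod G xs \<otimes> lprod G ys"
proof (induction xs)
  case Nil
  then show ?case using lprod_closed[OF _ subgroup_self, of ys] by simp
next
  case (Cons a xs)
  then show ?case using lprod_closed[OF _ subgroup_self, of xs] lprod_closed[OF _ subgroup_self, of ys]
    by (simp add: m_assoc)
qed

lemma (in group) rc0:
  assumes "subgroup N G" "y \<in> carrier G" "n \<in> N"
  shows "N #> (n \<otimes> y) = N #> y"
  using repr_independence[OF rcosI[OF assms(3) subgroup.subset[OF assms(1)] assms(2)] assms(2) assms(1)]
  by simp

context group begin

lemma lcanc1[simp]: "x \<in> carrier G \<Longrightarrow> y \<in> carrier G \<Longrightarrow> inv x \<otimes> (x \<otimes> y) = y"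
  by (simp add: m_assoc[symmetric])
lemma lcanc2[simp]: "x \<in> carrier G \<Longrightarrow> y \<in> carrier G \<Longrightarrow> x \<otimes> (inv x \<otimes> y) = y"
  by (simp add: m_assoc[symmetric])

lemma conj_derived:
  assumes H: "subgroup H G" and x: "x \<in> H" and c: "c \<in> derived G H"
  shows "x \<otimes> c \<otimes> inv x \<in> derived G H"
proof -
  have nrm: "derived G H \<lhd> G\<lparr>carrier := H\<rparr>" using derived_subgroup_is_normal[OF H] .
  have "x \<otimes>\<^bsub>G\<lparr>carrier := H\<rparr>\<^esub> c \<otimes>\<^bsub>G\<lparr>carrier := H\<rparr>\<^esub> inv\<^bsub>G\<lparr>carrier := H\<rparr>\<^esub> x \<in> derived G H"
    using normal.inv_op_closed2[OF nrm] x c by simp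
  then show ?thesis using H x by simp
qed

lemma comm_derived:
  assumes H: "subgroup H G" and a: "a \<in> H" and b: "b \<in> H"
  shows "a \<otimes> b \<otimes> inv a \<otimes> inv b \<in> derived G H"
  unfolding derived_def using a b by (auto intro!: generate.incl)

end

locale dctx = group G for G (structure) +
  fixes H N
  assumes H: "subgroup H G"
  defines "N \<equiv> derived G H"
begin

lemma sH: "H \<subseteq> carrier G" using H subgroup.subset by blast
lemma NH: "N \<subseteq> H" unfolding N_def using derived_incl[OF _ H] by simp
lemma subN: "subgroup N G" unfolding N_def using derived_is_subgroup[OF sH] .
lemma hc: "x \<in> H \<Longrightarrow> x \<in> carrier G" using sH by blast

lemma C4:
  assumes a: "a \<in> H" and p: "p \<in> H" and q: "q \<in> H" and e: "N #> p = N #> q"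
  shows "N #> (a \<otimes> p) = N #> (a \<otimes> q)"
proof -
  have "p \<in> N #> q" using e rcos_self[OF hc[OF p] subN] by simp
  then obtain n where n: "n \<in> N" "p = n \<otimes> q" unfolding r_coset_def by blast
  have nc: "n \<in> carrier G" using n(1) NH hc by blast
  have "a \<otimes> p = (a \<otimes> n \<otimes> inv a) \<otimes> (a \<otimes> q)"
    using n(2) nc hc[OF a] hc[OF q] by (simp add: m_assoc)
  moreover have "a \<otimes> n \<otimes> inv a \<in> N" using conj_derived[OF H a] n(1) unfolding N_def by simp
  ultimately show ?thesis using rc0[OF subN] hc a q by (simp add: subgroup.m_closed[OF H])
qed

lemma C5:
  assumes a: "a \<in> carrier G" and p: "p \<in> carrier G" and q: "q \<in> carrier G" and e: "N #> p = N #> q"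
  shows "N #> (p \<otimes> a) = N #> (q \<otimes> a)"
  using e coset_mult_assoc[OF subgroup.subset[OF subN]] a p q by metis

lemma C6:
  assumes a: "a \<in> H" and b: "b \<in> H"
  shows "N #> (a \<otimes> b) = N #> (b \<otimes> a)"
proof -
  have "a \<otimes> b = (a \<otimes> b \<otimes> inv a \<otimes> inv b) \<otimes> (b \<otimes> a)"
    using hc[OF a] hc[OF b] by (simp add: m_assoc)
  moreover have "a \<otimes> b \<otimes> inv a \<otimes> inv b \<in> N" using comm_derived[OF H a b] unfolding N_def .
  ultimately show ?thesis using rc0[OF subN] hc a b by (metis m_closed)
qed

lemma C7:
  assumes a: "a \<in> H" and q: "q \<in> H"
  shows "set u \<subseteq> H \<Longrightarrow> N #> (lprod G u \<otimes> (a \<otimes> q)) = N #> (a \<otimes> (lprod G u \<otimes> q))"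
proof (induction u)
  case Nil
  then show ?case using hc a q by simp
next
  case (Cons b u)
  have b: "b \<in> H" and u: "set u \<subseteq> H" using Cons.prems by auto
  have lu: "lprod G u \<in> H" using lprod_closed[OF u H] .
  note m = subgroup.m_closed[OF H]
  have "N #> (lprod G (b # u) \<otimes> (a \<otimes> q)) = N #> (b \<otimes> (lprod G u \<otimes> (a \<otimes> q)))"
    using hc b lu a q by (simp add: m_assoc)
  also have "\<dots> = N #> (b \<otimes> (a \<otimes> (lprod G u \<otimes> q)))"
    using C4[OF b _ _ Cons.IH[OF u]] lu a q m by simp
  also have "\<dots> = N #> ((b \<otimes> a) \<otimes> (lprod G u \<otimes> q))"
    using hc b lu a q m by (simp add: m_assoc)
  also have "\<dots> = N #> ((a \<otimes> b) \<otimes> (lprod G u \<otimes> q))"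
    using C5[OF _ _ _ C6[OF b a]] hc b lu a q m by simp
  also have "\<dots> = N #> (a \<otimes> (lprod G (b # u) \<otimes> q))"
    using hc b lu a q m by (simp add: m_assoc)
  finally show ?case .
qed

lemma C8:
  "mset xs = mset ys \<Longrightarrow> set xs \<subseteq> H \<Longrightarrow> N #> lprod G xs = N #> lprod G ys"
proof (induction xs arbitrary: ys)
  case Nil
  then show ?case by simp
next
  case (Cons a xs)
  have a: "a \<in> H" and xs: "set xs \<subseteq> H" using Cons.prems by auto
  have "a \<in> set ys" using Cons.prems(1) by (metis list.set_intros(1) set_mset_mset)
  then obtain u w where ys: "ys = u @ a # w" by (meson split_list)
  have ms: "mset xs = mset (u @ w)" using Cons.prems(1) ys by simp
  have ysH: "set ys \<subseteq> H" using Cons.prems by (metis mset_eq_setD)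
  have u: "set u \<subseteq> H" and w: "set w \<subseteq> H" using ysH ys by auto
  have uc: "set u \<subseteq> carrier G" and wc: "set w \<subseteq> carrier G" using u w sH by auto
  note m = subgroup.m_closed[OF H]
  have lu: "lprod G u \<in> H" and lw: "lprod G w \<in> H" and lx: "lprod G xs \<in> H"
    using lprod_closed[OF _ H] u w xs by auto
  have "N #> lprod G (a # xs) = N #> (a \<otimes> lprod G (u @ w))"
    using C4[OF a lx _ Cons.IH[OF ms xs]] lprod_closed[OF _ H, of "u @ w"] u w by simp
  also have "\<dots> = N #> (a \<otimes> (lprod G u \<otimes> lprod G w))"
    using lprod_append[OF uc wc] by simp
  also have "\<dots> = N #> (lprod G u \<otimes> (a \<otimes> lprod G w))"
    using C7[OF a lw u] by simp
  also have "\<dots> = N #> lprod G ys"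
    using ys lprod_append[of u "a # w"] uc wc hc[OF a] by simp
  finally show ?case .
qed

end

lemma canon_mset:
  "distinct ls \<Longrightarrow> set_mset M \<subseteq> set ls \<Longrightarrow>
    mset (concat (map (\<lambda>\<sigma>. replicate (count M \<sigma>) \<sigma>) ls)) = M"
proof (induction ls arbitrary: M)
  case Nil
  then show ?case by simp
next
  case (Cons a ls)
  define M' where "M' = filter_mset (\<lambda>x. x \<noteq> a) M"
  have M: "M = replicate_mset (count M a) a + M'"
    unfolding M'_def by (auto simp: multiset_eq_iff)
  have "set_mset M' \<subseteq> set ls" using Cons.prems unfolding M'_def by auto
  then have IH: "mset (concat (map (\<lambda>\<sigma>. replicate (count M' \<sigma>) \<sigma>) ls)) = M'"
    using Cons by simp
  have meq: "map (\<lambda>\<sigma>. replicate (count M \<sigma>) \<sigma>) ls = map (\<lambda>\<sigma>. replicate (count M' \<sigma>) \<sigma>) ls"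
    using Cons.prems(1) unfolding M'_def by (auto intro!: map_cong)
  have "mset (concat (map (\<lambda>\<sigma>. replicate (count M \<sigma>) \<sigma>) (a # ls))) = replicate_mset (count M a) a + M'"
    using IH by (simp del: mset_concat add: meq)
  then show ?case using M by metis
qed



fun wball :: "('a, 'b) monoid_scheme \<Rightarrow> 'a set \<Rightarrow> nat \<Rightarrow> 'a set" where
  "wball G S 0 = {\<one>\<^bsub>G\<^esub>}"
| "wball G S (Suc r) = wball G S r \<union> (\<lambda>(x, s). x \<otimes>\<^bsub>G\<^esub> s) ` (wball G S r \<times> S)"

locale dctx2 = dctx +
  fixes S
  assumes SG: "S \<subseteq> carrier G" and finG: "finite (carrier G)"
begin

definition repC :: "'a set \<Rightarrow> 'a" where
  "repC C = (if C = H then \<one> else SOME x. x \<in> C)"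
definition rep :: "'a \<Rightarrow> 'a" where "rep g = repC (H #> g)"
definition Tr :: "'a set" where "Tr = repC ` (rcosets H)"
definition Sig :: "'a set" where
  "Sig = (\<lambda>(t, s). t \<otimes> s \<otimes> inv (rep (t \<otimes> s))) ` (Tr \<times> S)"
definition XX :: "nat \<Rightarrow> 'a set" where "XX r = \<Union> ((\<lambda>g. N #> g) ` wball G S r)"

lemma finS: "finite S" using SG finG finite_subset by blast

lemma rep_in: "g \<in> carrier G \<Longrightarrow> rep g \<in> H #> g"
proof -
  assume g: "g \<in> carrier G"
  have gi: "g \<in> H #> g" using rcos_self[OF g H] .
  show ?thesis
  proof (cases "H #> g = H")
    case True
    then show ?thesis unfolding rep_def repC_def using subgroup.one_closed[OF H] by simp
  next
    case False
    then show ?thesis unfolding rep_def repC_def using someI[of "\<lambda>x. x \<in> H #> g", OF gi] by simp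
  qed
qed

lemma rep_carrier: "g \<in> carrier G \<Longrightarrow> rep g \<in> carrier G"
  using rep_in r_coset_subset_G[OF sH] by blast

lemma rep_coset: "g \<in> carrier G \<Longrightarrow> H #> rep g = H #> g"
  using repr_independence[OF rep_in _ H] by simp

lemma rep_H: "g \<in> carrier G \<Longrightarrow> g \<otimes> inv (rep g) \<in> H"
proof -
  assume g: "g \<in> carrier G"
  obtain h where h: "h \<in> H" "rep g = h \<otimes> g" using rep_in[OF g] unfolding r_coset_def by blast
  have hc: "h \<in> carrier G" using h sH by blast
  have "g \<otimes> inv (rep g) = inv h" using h(2) hc g by (simp add: inv_mult_group m_assoc[symmetric])
  then show ?thesis using h(1) subgroup.m_inv_closed[OF H] by simp
qed

lemma rep_one: "rep \<one> = \<one>"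
  unfolding rep_def repC_def using sH by simp

lemma rep_shift: "g \<in> carrier G \<Longrightarrow> s \<in> carrier G \<Longrightarrow> rep (rep g \<otimes> s) = rep (g \<otimes> s)"
proof -
  assume g: "g \<in> carrier G" and s: "s \<in> carrier G"
  have "H #> (rep g \<otimes> s) = (H #> rep g) #> s" using coset_mult_assoc[OF sH rep_carrier[OF g] s] by simp
  also have "\<dots> = (H #> g) #> s" using rep_coset[OF g] by simp
  also have "\<dots> = H #> (g \<otimes> s)" using coset_mult_assoc[OF sH g s] .
  finally show ?thesis unfolding rep_def by simp
qed

lemma Tr_rep: "g \<in> carrier G \<Longrightarrow> rep g \<in> Tr"
  unfolding Tr_def rep_def using rcosetsI[OF sH] by blast

lemma Tr_carrier: "t \<in> Tr \<Longrightarrow> \<exists>g\<in>carrier G. t = rep g"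
  unfolding Tr_def rep_def RCOSETS_def by blast

lemma Tr_sub: "Tr \<subseteq> carrier G" using Tr_carrier rep_carrier by blast

lemma card_Tr: "card Tr \<le> group_index G H"
  unfolding Tr_def group_index_def by (rule card_image_le) (simp add: finG rcosets_part_G[OF H] finite_UnionD[of "rcosets H"] rcosets_finite[OF _ sH] finite_Pow_iff)

lemma Sig_H: "Sig \<subseteq> H"
  unfolding Sig_def by (auto intro!: rep_H m_closed dest: subsetD[OF Tr_sub] subsetD[OF SG])

lemma Sig_fin: "finite Sig" unfolding Sig_def using finS Tr_sub finG finite_subset by blast

lemma card_Sig: "card Sig \<le> group_index G H * card S"
proof -
  have "card Sig \<le> card (Tr \<times> S)" unfolding Sig_def by (rule card_image_le) (use finS Tr_sub finG finite_subset in blast)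
  also have "\<dots> = card Tr * card S" by (simp add: card_cartesian_product)
  also have "\<dots> \<le> group_index G H * card S" using card_Tr by simp
  finally show ?thesis .
qed

lemma wball_carrier: "wball G S r \<subseteq> carrier G"
  by (induction r) (use SG in auto)

lemma W: "g \<in> wball G S r \<Longrightarrow> \<exists>xs. set xs \<subseteq> Sig \<and> length xs \<le> r \<and> g \<otimes> inv (rep g) = lprod G xs"
proof (induction r arbitrary: g)
  case 0
  then show ?case using rep_one by (intro exI[of _ "[]"]) simp
next
  case (Suc r)
  show ?case
  proof (cases "g \<in> wball G S r")
    case True
    then show ?thesis using Suc.IH le_Suc_eq by blast
  next
    case False
    then obtain x s where xs: "x \<in> wball G S r" "s \<in> S" "g = x \<otimes> s" using Suc.prems by auto
    have xc: "x \<in> carrier G" and sc: "s \<in> carrier G" using xs wball_carrier SG by auto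
    obtain ys where ys: "set ys \<subseteq> Sig" "length ys \<le> r" "x \<otimes> inv (rep x) = lprod G ys"
      using Suc.IH[OF xs(1)] by blast
    define \<sigma> where "\<sigma> = rep x \<otimes> s \<otimes> inv (rep (rep x \<otimes> s))"
    have sig: "\<sigma> \<in> Sig" unfolding Sig_def \<sigma>_def using Tr_rep[OF xc] xs(2) by force
    have rc: "rep x \<in> carrier G" using rep_carrier[OF xc] .
    have rgc: "rep (x \<otimes> s) \<in> carrier G" using rep_carrier xc sc by simp
    have "g \<otimes> inv (rep g) = (x \<otimes> inv (rep x)) \<otimes> \<sigma>"
      unfolding \<sigma>_def xs(3) rep_shift[OF xc sc] using xc sc rc rgc by (simp add: m_assoc)
    also have "\<dots> = lprod G (ys @ [\<sigma>])"
    proof -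
      have "set ys \<subseteq> carrier G" "\<sigma> \<in> carrier G" using ys(1) Sig_H sH sig by auto
      then show ?thesis using ys(3) lprod_append[of ys "[\<sigma>]"] by simp
    qed
    finally show ?thesis using ys sig by (intro exI[of _ "ys @ [\<sigma>]"]) auto
  qed
qed

end


context dctx2 begin

lemma finH: "finite H" using sH finG finite_subset by blast

lemma Y_bound: "card ((\<lambda>g. N #> g) ` wball G S r) \<le> group_index G H * (r + 1) ^ card Sig"
proof -
  obtain ls where ls: "distinct ls" "set ls = Sig" using finite_distinct_list[OF Sig_fin] by blast
  define canon where "canon v = concat (map (\<lambda>\<sigma>. replicate (v \<sigma>) \<sigma>) ls)" for v :: "'a \<Rightarrow> nat"
  define F where "F = (\<lambda>(C, v). N #> (lprod G (canon v) \<otimes> repC C))"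
  have sub: "(\<lambda>g. N #> g) ` wball G S r \<subseteq> F ` ((rcosets H) \<times> (PiE Sig (\<lambda>_. {0..r})))"
  proof
    fix y assume "y \<in> (\<lambda>g. N #> g) ` wball G S r"
    then obtain g where g: "g \<in> wball G S r" "y = N #> g" by blast
    have gc: "g \<in> carrier G" using g(1) wball_carrier by blast
    obtain xs where xs: "set xs \<subseteq> Sig" "length xs \<le> r" "g \<otimes> inv (rep g) = lprod G xs"
      using W[OF g(1)] by blast
    define v where "v = restrict (count (mset xs)) Sig"
    have cle: "count (mset xs) z \<le> r" for z
      using count_le_size[of "mset xs" z] xs(2) by simp
    have vP: "v \<in> PiE Sig (\<lambda>_. {0..r})"
      unfolding v_def using cle by auto
    have "canon v = canon (count (mset xs))"
    proof -
      have "map (\<lambda>\<sigma>. replicate (v \<sigma>) \<sigma>) ls = map (\<lambda>\<sigma>. replicate (count (mset xs) \<sigma>) \<sigma>) ls"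
        by (rule map_cong) (use ls(2) in \<open>auto simp: v_def\<close>)
      then show ?thesis unfolding canon_def by (rule arg_cong)
    qed
    moreover have "mset (canon (count (mset xs))) = mset xs"
      unfolding canon_def using canon_mset[OF ls(1), of "mset xs"] xs(1) ls(2) by simp
    ultimately have ms: "mset xs = mset (canon v)" by simp
    have xsH: "set xs \<subseteq> H" using xs(1) Sig_H by blast
    have cvH: "set (canon v) \<subseteq> H" using xsH ms by (metis mset_eq_setD)
    have e1: "N #> lprod G xs = N #> lprod G (canon v)" using C8[OF ms xsH] .
    have rc: "rep g \<in> carrier G" using rep_carrier[OF gc] .
    have lx: "lprod G xs \<in> carrier G" using lprod_closed[OF xsH H] sH by blast
    have lc: "lprod G (canon v) \<in> carrier G" using lprod_closed[OF cvH H] sH by blast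
    have "g = (g \<otimes> inv (rep g)) \<otimes> rep g" using gc rc by (simp add: m_assoc)
    then have "N #> g = N #> (lprod G xs \<otimes> rep g)" using xs(3) by simp
    also have "\<dots> = N #> (lprod G (canon v) \<otimes> rep g)" using C5[OF rc lx lc e1] .
    finally have "y = F (H #> g, v)" unfolding F_def rep_def using g(2) by simp
    moreover have "H #> g \<in> rcosets H" using rcosetsI[OF sH gc] .
    ultimately show "y \<in> F ` ((rcosets H) \<times> (PiE Sig (\<lambda>_. {0..r})))" using vP by blast
  qed
  have finR: "finite (rcosets H)"
    using finG rcosets_part_G[OF H] finite_UnionD[of "rcosets H"] by (metis finite_Pow_iff finite_subset rcosets_subset_PowG[OF H])
  have "card ((\<lambda>g. N #> g) ` wball G S r) \<le> card (F ` ((rcosets H) \<times> (PiE Sig (\<lambda>_. {0..r}))))"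
    using sub by (rule card_mono[rotated]) (use finR Sig_fin in \<open>simp add: finite_PiE\<close>)
  also have "\<dots> \<le> card ((rcosets H) \<times> (PiE Sig (\<lambda>_. {0..r})))" 
    by (rule card_image_le) (use finR Sig_fin in \<open>simp add: finite_PiE\<close>)
  also have "\<dots> = group_index G H * (r + 1) ^ card Sig"
    unfolding group_index_def using Sig_fin by (simp add: card_cartesian_product card_PiE)
  finally show ?thesis .
qed

lemma XX_carrier: "XX r \<subseteq> carrier G"
  unfolding XX_def using wball_carrier r_coset_subset_G[OF subgroup.subset[OF subN]] by blast

lemma XX_fin: "finite (XX r)" using XX_carrier finG finite_subset by blast

lemma XX_bound: "card (XX r) \<le> group_index G H * (r + 1) ^ card Sig * card N"
proof -
  have "card (XX r) \<le> sum card ((\<lambda>g. N #> g) ` wball G S r)"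
    unfolding XX_def by (rule card_Union_le_sum_card)
  also have "\<dots> = card ((\<lambda>g. N #> g) ` wball G S r) * card N"
  proof -
    have "\<And>u. u \<in> (\<lambda>g. N #> g) ` wball G S r \<Longrightarrow> card u = card N"
      using card_rcosets_equal[OF _ subgroup.subset[OF subN]] rcosetsI[OF subgroup.subset[OF subN]] wball_carrier
      by (metis imageE subsetD)
    then show ?thesis by simp
  qed
  also have "\<dots> \<le> group_index G H * (r + 1) ^ card Sig * card N" using Y_bound by simp
  finally show ?thesis .
qed

lemma XX0: "XX 0 = N" unfolding XX_def using subgroup.subset[OF subN] by simp

lemma wball_mono: "r \<le> r' \<Longrightarrow> wball G S r \<subseteq> wball G S r'"
  by (induction r' rule: dec_induct) auto

lemma XX_mono: "r \<le> r' \<Longrightarrow> XX r \<subseteq> XX r'"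
  unfolding XX_def using wball_mono by blast

lemma bdry: "cay_vboundary G S (XX r) \<subseteq> XX (Suc r) - XX r"
proof
  fix y assume y: "y \<in> cay_vboundary G S (XX r)"
  then obtain x s where xs: "y \<notin> XX r" "x \<in> XX r" "s \<in> S" "y = x \<otimes> s"
    unfolding cay_vboundary_def by blast
  obtain g where g: "g \<in> wball G S r" "x \<in> N #> g" using xs(2) unfolding XX_def by blast
  obtain m where m: "m \<in> N" "x = m \<otimes> g" using g(2) unfolding r_coset_def by blast
  have gc: "g \<in> carrier G" using g wball_carrier by blast
  have mc: "m \<in> carrier G" using m NH sH by blast
  have sc: "s \<in> carrier G" using xs SG by blast
  have "y = m \<otimes> (g \<otimes> s)" using xs(4) m(2) gc mc sc by (simp add: m_assoc)
  then have "y \<in> N #> (g \<otimes> s)" unfolding r_coset_def using m(1) by blast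
  moreover have "g \<otimes> s \<in> wball G S (Suc r)" using g(1) xs(3) by force
  ultimately show "y \<in> XX (Suc r) - XX r" using xs(1) unfolding XX_def by blast
qed

end


context dctx2 begin

lemma idx_bound:
  assumes hv: "cay_hver_ge G S \<epsilon>" and eps: "\<epsilon> > 0" and cS: "card S \<le> c"
    and kH: "group_index G H \<le> k"
    and R: "real k * (real R + 1) ^ (k * c) < (1 + \<epsilon>) ^ R"
  shows "group_index (G\<lparr>carrier := H\<rparr>) N < 2 * k * (R + 1) ^ (k * c)"
proof (rule ccontr)
  define idx where "idx = group_index (G\<lparr>carrier := H\<rparr>) N"
  assume "\<not> group_index (G\<lparr>carrier := H\<rparr>) N < 2 * k * (R + 1) ^ (k * c)"
  then have M: "2 * k * (R + 1) ^ (k * c) \<le> idx" unfolding idx_def by simp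
  have gH: "group (G\<lparr>carrier := H\<rparr>)" using subgroup_imp_group[OF H] .
  have "subgroup N (G\<lparr>carrier := H\<rparr>)" using subgroup_incl[OF subN H NH] .
  from group.lagrange[OF gH this] have cH: "idx * card N = card H"
    unfolding idx_def group_index_def order_def by simp
  have finN: "finite N" using NH finH finite_subset by blast
  have oneN: "\<one> \<in> N" using subgroup.one_closed[OF subN] .
  have Npos: "card N > 0" using finN oneN card_gt_0_iff by blast
  have cSig: "card Sig \<le> k * c"
    using card_Sig kH cS mult_le_mono by (meson order_trans)
  have bnd: "card (XX r) \<le> k * (r + 1) ^ (k * c) * card N" for r
  proof -
    have "card (XX r) \<le> group_index G H * (r + 1) ^ card Sig * card N" by (rule XX_bound)
    also have "\<dots> \<le> k * (r + 1) ^ (k * c) * card N"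
      by (intro mult_le_mono kH power_increasing cSig order_refl) simp
    finally show ?thesis .
  qed
  have nH: "card H \<le> card (carrier G)" using card_mono[OF finG sH] .
  have half: "2 * card (XX r) \<le> card (carrier G)" if "r \<le> R" for r
  proof -
    have "card (XX r) \<le> card (XX R)" using card_mono[OF XX_fin XX_mono[OF that]] .
    also have "\<dots> \<le> k * (R + 1) ^ (k * c) * card N" by (rule bnd)
    finally have "2 * card (XX r) \<le> (2 * k * (R + 1) ^ (k * c)) * card N" by simp
    also have "\<dots> \<le> idx * card N" using M by simp
    finally show ?thesis using cH nH by simp
  qed
  have growth: "(1 + \<epsilon>) * card (XX r) \<le> card (XX (Suc r))" if "r < R" for r
  proof -
    define B where "B = cay_vboundary G S (XX r)"
    have ne: "XX r \<noteq> {}" using XX0 XX_mono[of 0 r] oneN by auto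
    have cpos: "card (XX r) > 0" using ne XX_fin card_gt_0_iff by blast
    have "real (card (XX r)) \<le> real (card (carrier G)) / 2" using half[of r] that by simp
    then have "\<epsilon> \<le> real (card B) / real (card (XX r))"
      using hv XX_carrier ne unfolding cay_hver_ge_def B_def by blast
    then have e1: "\<epsilon> * card (XX r) \<le> card B" using cpos by (simp add: le_divide_eq)
    have BX: "B \<subseteq> XX (Suc r) - XX r" unfolding B_def by (rule bdry)
    have "XX r \<union> B \<subseteq> XX (Suc r)" using BX XX_mono[of r "Suc r"] by auto
    then have "card (XX r \<union> B) \<le> card (XX (Suc r))" using card_mono XX_fin by blast
    moreover have "card (XX r \<union> B) = card (XX r) + card B"
    proof -
      have "finite B" using BX XX_fin[of "Suc r"] finite_subset by blast
      then show ?thesis using BX XX_fin by (intro card_Un_disjoint) auto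
    qed
    ultimately have "card (XX r) + card B \<le> card (XX (Suc r))" by simp
    then show ?thesis using e1 by (simp add: algebra_simps)
  qed
  have lower: "r \<le> R \<Longrightarrow> (1 + \<epsilon>) ^ r * card N \<le> card (XX r)" for r
  proof (induction r)
    case 0
    then show ?case using XX0 by simp
  next
    case (Suc r)
    then have "(1 + \<epsilon>) ^ Suc r * card N \<le> (1 + \<epsilon>) * card (XX r)"
      using eps by (simp add: mult.assoc)
    also have "\<dots> \<le> card (XX (Suc r))" using growth Suc by simp
    finally show ?case .
  qed
  have a: "(1 + \<epsilon>) ^ R * card N \<le> real (card (XX R))" using lower[of R] by simp
  have "real (card (XX R)) \<le> real (k * (R + 1) ^ (k * c) * card N)"
    using bnd[of R] of_nat_le_iff by blast
  then have b: "real (card (XX R)) \<le> (real k * (real R + 1) ^ (k * c)) * real (card N)"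
    by (simp add: add.commute)
  have "(1 + \<epsilon>) ^ R * card N \<le> (real k * (real R + 1) ^ (k * c)) * real (card N)"
    using a b by linarith
  then have "(1 + \<epsilon>) ^ R \<le> real k * (real R + 1) ^ (k * c)"
    using Npos by (simp only: mult_le_cancel_right_pos of_nat_0_less_iff)
  then show False using R by simp
qed

end

lemma exists_R:
  assumes "\<epsilon> > 0"
  shows "\<exists>R::nat. real k * (real R + 1) ^ m < (1 + \<epsilon>) ^ R"
proof -
  have lim: "((\<lambda>R. (real R + 1) ^ m / (1 + \<epsilon>) ^ R) \<longlongrightarrow> 0) sequentially"
    using assms by real_asymp
  have "1 / (real k + 1) > 0" by simp
  from order_tendstoD(2)[OF lim this] obtain R where
    R: "(real R + 1) ^ m / (1 + \<epsilon>) ^ R < 1 / (real k + 1)"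
    unfolding eventually_sequentially by blast
  have pos: "(1 + \<epsilon>) ^ R > 0" using assms by simp
  have "(real R + 1) ^ m * (real k + 1) < (1 + \<epsilon>) ^ R"
    using R pos by (simp add: divide_simps mult.commute)
  moreover have "real k * (real R + 1) ^ m \<le> (real R + 1) ^ m * (real k + 1)"
    by (simp add: algebra_simps)
  ultimately show ?thesis by (intro exI[of _ R]) linarith
qed

lemma bab_bound:
  assumes G: "group G" "finite (carrier G)" and ab: "\<And>k. ab_k k G \<le> f k"
    and dl: "(derived G ^^ d) (carrier G) = {\<one>\<^bsub>G\<^esub>}"
  shows "card (carrier G) \<le> Bd d f"
proof -
  have "\<forall>K k. subgroup K G \<longrightarrow> K \<subseteq> carrier G \<longrightarrow> card (carrier G) \<le> k * card K \<longrightarrow>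
          card K \<le> f k * card (derived G K)"
  proof (intro allI impI)
    fix K k assume K: "subgroup K G" "K \<subseteq> carrier G" "card (carrier G) \<le> k * card K"
    have finK: "finite K" using K(2) G(2) finite_subset by blast
    have Kpos: "card K > 0" using finK subgroup.one_closed[OF K(1)] card_gt_0_iff by blast
    have "group_index G K * card K \<le> k * card K" using idx_mult[OF G K(1)] K(3) by simp
    then have iK: "group_index G K \<le> k" using Kpos by simp
    define Y where "Y = {group_index (G\<lparr>carrier := H\<rparr>) (derived G H) | H. subgroup H G \<and> group_index G H \<le> k}"
    have "Y \<subseteq> (\<lambda>H. group_index (G\<lparr>carrier := H\<rparr>) (derived G H)) ` Pow (carrier G)"
      unfolding Y_def using subgroup.subset by blast
    then have finY: "finite Y" using G(2) finite_surj by blast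
    have "group_index (G\<lparr>carrier := K\<rparr>) (derived G K) \<in> Y" unfolding Y_def using K(1) iK by blast
    then have "group_index (G\<lparr>carrier := K\<rparr>) (derived G K) \<le> Sup Y" using le_cSup_finite finY by blast
    also have "Sup Y = ab_k k G" unfolding Y_def ab_k_def by simp
    also have "\<dots> \<le> f k" by (rule ab)
    finally have v: "group_index (G\<lparr>carrier := K\<rparr>) (derived G K) \<le> f k" .
    have "group_index (G\<lparr>carrier := K\<rparr>) (derived G K) * card (derived G K) = card K"
      using idx_sub_mult[OF G(1) K(1) group.derived_is_subgroup[OF G(1) K(2)] group.derived_incl[OF G(1) _ K(1)]] by simp
    then show "card K \<le> f k * card (derived G K)" using v by (metis mult_le_mono1)
  qed
  then show ?thesis using bound_A[OF G group.subgroup_self[OF G(1)] dl] by blast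
qed

lemma expanding_imp_BAb:
  assumes grp: "\<And>n. group (G n)" and fin: "\<And>n. finite (carrier (G n))"
    and ex: "expanding_sequence G"
  shows "has_BAb G"
proof -
  obtain S c \<epsilon> where e: "\<epsilon> > 0" and
    Sn: "\<And>n. symmetric_generating_set (G n) (S n) \<and> card (S n) \<le> c \<and> cay_hver_ge (G n) (S n) \<epsilon>"
    using ex unfolding expanding_sequence_def by blast
  define Rk where "Rk k = (SOME R::nat. real k * (real R + 1) ^ (k * c) < (1 + \<epsilon>) ^ R)" for k
  have Rk: "real k * (real (Rk k) + 1) ^ (k * c) < (1 + \<epsilon>) ^ (Rk k)" for k
    unfolding Rk_def using someI_ex[OF exists_R[OF e]] .
  define f where "f k = 2 * k * (Rk k + 1) ^ (k * c)" for k
  have "ab_k k (G n) \<le> f k" for k n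
  proof -
    define Y where "Y = {group_index ((G n)\<lparr>carrier := H\<rparr>) (derived (G n) H) | H. subgroup H (G n) \<and> group_index (G n) H \<le> k}"
    have "\<forall>y\<in>Y. y \<le> f k"
    proof
      fix y assume "y \<in> Y"
      then obtain H where H: "subgroup H (G n)" "group_index (G n) H \<le> k"
        "y = group_index ((G n)\<lparr>carrier := H\<rparr>) (derived (G n) H)" unfolding Y_def by blast
      have dc: "dctx2 (G n) H (S n)"
        unfolding dctx2_def dctx_def dctx2_axioms_def dctx_axioms_def
        using H(1) grp[of n] fin[of n] Sn[of n] by (simp add: symmetric_generating_set_def)
      interpret D: dctx2 "G n" H "derived (G n) H" "S n"
      proof -
        show "dctx2 (G n) H (S n)" by (rule dc)
        show "derived (G n) H \<equiv> derived (G n) H" by (rule reflexive)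
      qed
      have "y < f k" unfolding H(3) f_def
        using D.idx_bound[OF _ e _ H(2) Rk] Sn by blast
      then show "y \<le> f k" by simp
    qed
    then have "Sup Y \<le> f k" by (cases "Y = {}") (auto intro: cSup_least)
    then show ?thesis unfolding ab_k_def Y_def by simp
  qed
  then show ?thesis unfolding has_BAb_def by blast
qed

theorem mainTheorem5:
  fixes G :: "nat \<Rightarrow> ('a, 'b) monoid_scheme"
  assumes grp: "\<And>n. group (G n)"
    and fin: "\<And>n. finite (carrier (G n))"
    and solv: "\<And>n. solvable (G n)"
    and bounded_dl: "\<exists>d. \<forall>n. (derived (G n) ^^ d) (carrier (G n)) = {\<one>\<^bsub>G n\<^esub>}"
    and card_inf: "filterlim (\<lambda>n. card (carrier (G n))) at_top sequentially"
  shows "\<not> has_BAb G \<and> \<not> expanding_sequence G"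
proof -
  have nb: "\<not> has_BAb G"
  proof
    assume "has_BAb G"
    then obtain f where f: "\<And>k n. ab_k k (G n) \<le> f k" unfolding has_BAb_def by blast
    obtain d where d: "\<And>n. (derived (G n) ^^ d) (carrier (G n)) = {\<one>\<^bsub>G n\<^esub>}" using bounded_dl by blast
    have b: "card (carrier (G n)) \<le> Bd d f" for n using bab_bound[OF grp fin f d] .
    have "eventually (\<lambda>n. card (carrier (G n)) \<ge> Suc (Bd d f)) sequentially"
      using card_inf unfolding filterlim_at_top by blast
    then obtain n where "card (carrier (G n)) \<ge> Suc (Bd d f)" unfolding eventually_sequentially by blast
    then show False using b[of n] by simp
  qed
  moreover have "\<not> expanding_sequence G" using nb expanding_imp_BAb[of G, OF grp fin] by blast
  ultimately show ?thesis by blast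
qed

end
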